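(* Let $a\in\mathbb{R}$, $b\in(a,\infty)$, $h\in\mathbb{N}$, $v_1,\dots,v_h,w_1,\dots,w_h\in(0,\infty)$, let $f,p\in C(\mathbb{R},\mathbb{R})$ satisfy for all $x\in\mathbb{R}$ that $p(x)\ge0$ and $p^{-1}((0,\infty))=(a,b)$, with $\mathcal{N}^\theta$, $\mathcal{L}$, $I_i^\theta$, $\operatorname{Lip}$ as in the context. Assume that $f$ is non-decreasing and satisfies $\operatorname{Lip}(f)<\min_{i\in\{1,\dots,h\}}v_iw_i$, let $\vartheta\in\mathbb{R}^{h+1}$ satisfy $(\nabla\mathcal{L})(\vartheta)=0$, and let $V=\sup_{x\in(a,b)}\sum_{j\in\{1,\dots,h\},\,x\in I_j^\vartheta}v_j$. Then (i) for all $j\in\{1,\dots,h\}$, $x\in I_j^\vartheta$ it holds that $|\mathcal{N}^\vartheta(x)-f(x)|\le V$; (ii) for all $j,k\in\{1,\dots,h\}$ with $I_j^\vartheta\neq\emptyset\neq I_k^\vartheta$ and all $x\in[\sup I_j^\vartheta,\inf I_k^\vartheta]$ it holds that $|\mathcal{N}^\vartheta(x)-f(x)|\le V$; (iii) for all $j\in\{1,\dots,h\}$ with $I_j^\vartheta\neq\emptyset$ and all $x\in[\sup I_j^\vartheta,b]$ it holds that $|\mathcal{N}^\vartheta(x)-f(x)|\le\max\{V,|f(b)-\mathcal{N}^\vartheta(b)|\}$; and (iv) for all $j\in\{1,\dots,h\}$ with $I_j^\vartheta\neq\emptyset$ and all $x\in[a,\inf I_j^\vartheta]$ it holds that $|\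mathcal{N}^\vartheta(x)-f(x)|\le\max\{V,|f(a)-\mathcal{N}^\vartheta(a)|\}$.
   Context: Let $\mathfrak{c}(x)=\min\{\max\{x,0\},1\}$. For $F\in C(\mathbb{R},\mathbb{R})$ let $\operatorname{Lip}(F)=\sup_{x,y\in[a,b],x\ne y}\frac{|F(x)-F(y)|}{|x-y|}$. For $\theta=(\theta_1,\dots,\theta_{h+1})\in\mathbb{R}^{h+1}$ and $i\in\{1,\dots,h\}$ let $\psi_i(\theta)=-[w_i]^{-1}\theta_i$, $I_i^\theta=(\psi_i(\theta),\psi_i(\theta)+[w_i]^{-1})\cap(a,b)$, $\mathcal{N}^\theta(x)=\theta_{h+1}+\sum_{i=1}^hv_i\mathfrak{c}(w_ix+\theta_i)$, and $\mathcal{L}(\theta)=\int_a^b(\mathcal{N}^\theta(x)-f(x))^2p(x)\,\mathrm{d}x$ ($\mathcal{L}$ is continuously differentiable). *)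

theory Defs
  imports "HOL-Analysis.Analysis"
begin

definition clip :: "real \<Rightarrow> real" where
  "clip x = min (max x 0) 1"

definition Lip :: "(real \<Rightarrow> real) \<Rightarrow> real \<Rightarrow> real \<Rightarrow> ereal" where
  "Lip F a b = Sup {ereal (\<bar>F x - F y\<bar> / \<bar>x - y\<bar>) | x y.
      x \<in> {a..b} \<and> y \<in> {a..b} \<and> x \<noteq> y}"

text \<open>Parameter vectors theta in R^(h+1) are functions nat => real, components 1..h+1.\<close>
definition psi :: "(nat \<Rightarrow> real) \<Rightarrow> (nat \<Rightarrow> real) \<Rightarrow> nat \<Rightarrow> real" where
  "psi w \<theta> i = - (\<theta> i) / w i"

definition Iint :: "real \<Rightarrow> real \<Rightarrow> (nat \<Rightarrow> real) \<Rightarrow> (nat \<Rightarrow> real) \<Rightarrow> nat \<Rightarrow> real set" where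
  "Iint a b w \<theta> i = {psi w \<theta> i <..< psi w \<theta> i + 1 / w i} \<inter> {a<..<b}"

definition NN :: "nat \<Rightarrow> (nat \<Rightarrow> real) \<Rightarrow> (nat \<Rightarrow> real) \<Rightarrow> (nat \<Rightarrow> real) \<Rightarrow> real \<Rightarrow> real" where
  "NN h v w \<theta> x = \<theta> (h + 1) + (\<Sum>i = 1..h. v i * clip (w i * x + \<theta> i))"

definition LL :: "real \<Rightarrow> real \<Rightarrow> nat \<Rightarrow> (nat \<Rightarrow> real) \<Rightarrow> (nat \<Rightarrow> real)
    \<Rightarrow> (real \<Rightarrow> real) \<Rightarrow> (real \<Rightarrow> real) \<Rightarrow> (nat \<Rightarrow> real) \<Rightarrow> real" where
  "LL a b h v w f p \<theta> = integral {a..b} (\<lambda>x. (NN h v w \<theta> x - f x)\<^sup>2 * p x)"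

definition Vsup :: "real \<Rightarrow> real \<Rightarrow> nat \<Rightarrow> (nat \<Rightarrow> real) \<Rightarrow> (nat \<Rightarrow> real) \<Rightarrow> (nat \<Rightarrow> real) \<Rightarrow> real" where
  "Vsup a b h v w \<theta> = Sup ((\<lambda>x. \<Sum>j\<in>{j \<in> {1..h}. x \<in> Iint a b w \<theta> j}. v j) ` {a<..<b})"

end

theory Submission
  imports Defs
begin


lemma clip_mono: "x \<le> y \<Longrightarrow> clip x \<le> clip y"
  unfolding clip_def by auto
lemma clip_ge0: "0 \<le> clip x" unfolding clip_def by auto
lemma clip_le1: "clip x \<le> 1" unfolding clip_def by auto
lemma clip_lin: "0 \<le> x \<Longrightarrow> x \<le> 1 \<Longrightarrow> clip x = x" unfolding clip_def by auto
lemma clip_lip: "\<bar>clip x - clip y\<bar> \<le> \<bar>x - y\<bar>" unfolding clip_def by auto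
lemma clip_cont: "continuous_on S clip"
  unfolding clip_def by (intro continuous_intros)

lemma NN_cont: "continuous_on S (NN h v w \<theta>)"
  unfolding NN_def
  by (intro continuous_intros continuous_on_compose2[OF clip_cont[of UNIV]]) auto

lemma Iint_mem:
  assumes "w i > 0"
  shows "x \<in> Iint a b w \<theta> i \<longleftrightarrow> a < x \<and> x < b \<and> 0 < w i * x + \<theta> i \<and> w i * x + \<theta> i < 1"
proof -
  have "(- \<theta> i / w i < x) = (0 < w i * x + \<theta> i)" using assms
    by (auto simp add: field_simps)
  moreover have "(x < - \<theta> i / w i + 1 / w i) = (w i * x + \<theta> i < 1)" using assms
    by (auto simp add: field_simps)
  ultimately show ?thesis unfolding Iint_def psi_def by auto
qed

lemma NN_upd:
  assumes "i \<in> {1..h}"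
  shows "NN h v w (\<theta>(i := s)) x = NN h v w \<theta> x + v i * (clip (w i * x + s) - clip (w i * x + \<theta> i))"
proof -
  let ?F = "\<lambda>j. v j * clip (w j * x + (\<theta>(i := s)) j)"
  let ?E = "\<lambda>j. v j * clip (w j * x + \<theta> j)"
  have fin: "finite {1..h}" by simp
  have "sum ?F {1..h} = ?F i + sum ?F ({1..h} - {i})" using sum.remove[OF fin assms, of ?F] by blast
  moreover have "sum ?E {1..h} = ?E i + sum ?E ({1..h} - {i})" using sum.remove[OF fin assms, of ?E] by blast
  moreover have "sum ?F ({1..h} - {i}) = sum ?E ({1..h} - {i})" by (rule sum.cong) auto
  moreover have "(\<theta>(i := s)) (h+1) = \<theta> (h+1)" using assms by auto
  moreover have "?F i = v i * clip (w i * x + s)" by simp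
  ultimately show ?thesis unfolding NN_def right_diff_distrib by linarith
qed

lemma ind_int:
  fixes a b c d k :: real
  shows "((\<lambda>x. if x \<in> {c..d} then k else 0) has_integral (max 0 (min d b - max c a) * k)) {a..b}"
proof -
  have e: "{c..d} \<inter> {a..b} = {max c a..min d b}" by auto
  have h2: "((\<lambda>x. k) has_integral (max 0 (min d b - max c a) * k)) {max c a..min d b}"
    using has_integral_const_real[of k "max c a" "min d b"] by (simp add: max_def)
  show ?thesis unfolding has_integral_restrict_Int e by (rule h2)
qed

lemma pw1:
  fixes g d q t M P v :: real
  assumes "\<bar>d\<bar> \<le> t" "0 \<le> q" "q \<le> P" "\<bar>g\<bar> \<le> M" "v > 0"
  shows "(2 * v * g * d) * q \<le> 2 * v * M * t * P"
proof -
  have "\<bar>g * d * q\<bar> \<le> M * t * P"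
    unfolding abs_mult using assms
    by (intro mult_mono) (auto simp: abs_le_iff)
  hence "g * d * q \<le> M * t * P" by linarith
  thus ?thesis using assms(5) by (simp add: mult.assoc mult_left_mono)
qed

lemma pw2:
  fixes d q t P v :: real
  assumes "\<bar>d\<bar> \<le> t" "0 \<le> q" "q \<le> P"
  shows "(v^2 * d^2) * q \<le> v^2 * t^2 * P"
proof -
  have t0: "0 \<le> t" using assms(1) by linarith
  have "\<bar>d\<bar> \<le> \<bar>t\<bar>" using assms(1) t0 by simp
  hence "d^2 \<le> t^2" by (metis abs_le_square_iff)
  hence "d^2 * q \<le> t^2 * P" using assms by (intro mult_mono) auto
  thus ?thesis by (simp add: mult.assoc mult_left_mono)
qed



lemma crit:
  fixes a b :: real and h :: nat and v w \<theta> :: "nat \<Rightarrow> real" and f p :: "real \<Rightarrow> real" and \<sigma> :: real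
  assumes ab: "a < b" and vp: "v i > 0" and wp: "w i > 0" and iin: "i \<in> {1..h}"
    and fc: "continuous_on UNIV f" and pc: "continuous_on UNIV p"
    and p0: "\<forall>x. p x \<ge> 0" and ps: "{x. p x > 0} = {a<..<b}"
    and der: "((\<lambda>t. LL a b h v w f p (\<theta>(i := t))) has_real_derivative 0) (at (\<theta> i))"
    and ne: "Iint a b w \<theta> i \<noteq> {}" and sg: "\<sigma> = 1 \<or> \<sigma> = -1"
    and neg: "\<forall>x\<in>Iint a b w \<theta> i. \<sigma> * (NN h v w \<theta> x - f x) < 0"
  shows False
proof -
  define G where "G x = NN h v w \<theta> x - f x" for x
  have Gc: "continuous_on S G" for S unfolding G_def
    by (intro continuous_intros NN_cont continuous_on_subset[OF fc]) auto
  have pcS: "continuous_on S p" for S using continuous_on_subset[OF pc] by auto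
  define lo where "lo = max a (- \<theta> i / w i)"
  define hi where "hi = min b ((1 - \<theta> i) / w i)"
  have Imem: "x \<in> Iint a b w \<theta> i \<longleftrightarrow> lo < x \<and> x < hi" for x
  proof -
    have e1: "(- \<theta> i / w i < x) = (- \<theta> i < x * w i)" using pos_divide_less_eq[OF wp] by blast
    have e2: "(x < (1 - \<theta> i) / w i) = (x * w i < 1 - \<theta> i)" using pos_less_divide_eq[OF wp] by blast
    have "(0 < w i * x + \<theta> i) = (- \<theta> i / w i < x)" unfolding e1 by (simp add: mult.commute) linarith
    moreover have "(w i * x + \<theta> i < 1) = (x < (1 - \<theta> i) / w i)" unfolding e2 by (simp add: mult.commute) linarith
    ultimately show ?thesis unfolding Iint_mem[where w=w and i=i, OF wp] lo_def hi_def max_less_iff_conj min_less_iff_conj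
      by blast
  qed
  have loh: "lo < hi"
  proof -
    obtain x0 where "x0 \<in> Iint a b w \<theta> i" using ne by blast
    hence "lo < x0 \<and> x0 < hi" using Imem by blast
    thus ?thesis by linarith
  qed
  define \<alpha> where "\<alpha> = lo + (hi - lo)/3"
  define \<beta> where "\<beta> = hi - (hi - lo)/3"
  have ab1: "lo < \<alpha>" "\<alpha> < \<beta>" "\<beta> < hi" using loh unfolding \<alpha>_def \<beta>_def by (simp_all add: field_simps)
  have abI: "x \<in> Iint a b w \<theta> i" if "x \<in> {\<alpha>..\<beta>}" for x
    using that ab1 Imem by auto
  have lohab: "a \<le> lo" "hi \<le> b" unfolding lo_def hi_def by auto
  define \<phi> where "\<phi> x = - \<sigma> * G x * p x" for x
  have \<phi>c: "continuous_on {\<alpha>..\<beta>} \<phi>" unfolding \<phi>_def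
    by (intro continuous_intros Gc pcS)
  obtain xm where xm: "xm \<in> {\<alpha>..\<beta>}" "\<forall>y\<in>{\<alpha>..\<beta>}. \<phi> xm \<le> \<phi> y"
    using continuous_attains_inf[OF compact_Icc _ \<phi>c] ab1 by auto
  define \<mu> where "\<mu> = \<phi> xm"
  have \<mu>pos: "\<mu> > 0"
  proof -
    have xI: "xm \<in> Iint a b w \<theta> i" using abI xm by auto
    hence "xm \<in> {a<..<b}" unfolding Iint_def by auto
    hence "p xm > 0" using ps by auto
    moreover have "- \<sigma> * G xm > 0" using neg xI unfolding G_def by force
    ultimately show ?thesis unfolding \<mu>_def \<phi>_def by (simp add: mult_neg_pos)
  qed
  have Gac: "continuous_on {a..b} (\<lambda>x. \<bar>G x\<bar>)" by (intro continuous_intros Gc)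
  obtain xM where xM: "xM \<in> {a..b}" "\<forall>y\<in>{a..b}. \<bar>G y\<bar> \<le> \<bar>G xM\<bar>"
    using continuous_attains_sup[OF compact_Icc _ Gac] ab by auto
  define M where "M = \<bar>G xM\<bar>"
  obtain xP where xP: "xP \<in> {a..b}" "\<forall>y\<in>{a..b}. p y \<le> p xP"
    using continuous_attains_sup[OF compact_Icc _ pcS, of a b] ab by auto
  define P where "P = p xP"
  have M0: "M \<ge> 0" unfolding M_def by simp
  have P0: "P \<ge> 0" unfolding P_def using p0 by simp
  define \<tau>0 where "\<tau>0 = min (w i * \<alpha> + \<theta> i) (1 - (w i * \<beta> + \<theta> i))"
  have \<tau>0pos: "\<tau>0 > 0"
  proof -
    have "\<alpha> \<in> Iint a b w \<theta> i" "\<beta> \<in> Iint a b w \<theta> i" using abI ab1 by auto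
    thus ?thesis unfolding \<tau>0_def using Iint_mem[where w=w and i=i, OF wp] by auto
  qed
  define K where "K = 4 * v i * M * P / w i + (v i)^2 * P * (b - a)"
  define c where "c = v i * \<mu> * (\<beta> - \<alpha>)"
  have K0: "K \<ge> 0" unfolding K_def using vp wp M0 P0 ab by simp
  have c0: "c > 0" unfolding c_def using vp \<mu>pos ab1 by simp
  define LL0 where "LL0 s = LL a b h v w f p (\<theta>(i := s))" for s
  have key: "LL0 (\<theta> i + \<sigma> * t) - LL0 (\<theta> i) \<le> - c * t" if t0: "0 < t" and t1: "t \<le> \<tau>0" and t2: "t * K \<le> c" for t
  proof -
    define \<Delta> where "\<Delta> x = clip (w i * x + (\<theta> i + \<sigma> * t)) - clip (w i * x + \<theta> i)" for x
    have NNu: "NN h v w (\<theta>(i := \<theta> i + \<sigma> * t)) x = NN h v w \<theta> x + v i * \<Delta> x" for x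
      unfolding \<Delta>_def using NN_upd[OF iin] by simp
    have \<Delta>c: "continuous_on S \<Delta>" for S unfolding \<Delta>_def
      by (intro continuous_intros continuous_on_compose2[OF clip_cont[of UNIV]]) auto
    have L0: "LL0 (\<theta> i) = integral {a..b} (\<lambda>x. (G x)^2 * p x)"
      unfolding LL0_def LL_def G_def by simp
    have L1: "LL0 (\<theta> i + \<sigma> * t) = integral {a..b} (\<lambda>x. (G x + v i * \<Delta> x)^2 * p x)"
      unfolding LL0_def LL_def
    proof (rule integral_cong)
      fix x show "(NN h v w (\<theta>(i := \<theta> i + \<sigma> * t)) x - f x)\<^sup>2 * p x = (G x + v i * \<Delta> x)\<^sup>2 * p x"
        unfolding NNu G_def by (simp add: algebra_simps)
    qed
    have i0: "(\<lambda>x. (G x)^2 * p x) integrable_on {a..b}"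
      by (intro integrable_continuous_interval continuous_intros Gc pcS)
    have i1: "(\<lambda>x. (G x + v i * \<Delta> x)^2 * p x) integrable_on {a..b}"
      by (intro integrable_continuous_interval continuous_intros Gc pcS \<Delta>c)
    have Ldiff: "LL0 (\<theta> i + \<sigma> * t) - LL0 (\<theta> i) = integral {a..b} (\<lambda>x. (G x + v i * \<Delta> x)^2 * p x - (G x)^2 * p x)"
      unfolding L0 L1 using integral_diff[OF i1 i0] by simp
    define l1 where "l1 = (- \<theta> i - t) / w i"
    define l2 where "l2 = - \<theta> i / w i"
    define e1 where "e1 = (1 - \<theta> i) / w i"
    define e2 where "e2 = (1 - \<theta> i + t) / w i"
    define B where "B x = (if x \<in> {\<alpha>..\<beta>} then - (2 * v i * t * \<mu>) else 0)
        + (if x \<in> {l1..l2} then 2 * v i * M * t * P else 0)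
        + (if x \<in> {e1..e2} then 2 * v i * M * t * P else 0) + (v i)^2 * t^2 * P" for x
    define X1 where "X1 = max 0 (min \<beta> b - max \<alpha> a)"
    define X2 where "X2 = max 0 (min l2 b - max l1 a)"
    define X3 where "X3 = max 0 (min e2 b - max e1 a)"
    define IB where "IB = X1 * (- (2 * v i * t * \<mu>)) + X2 * (2 * v i * M * t * P) + X3 * (2 * v i * M * t * P)
        + (b - a) * ((v i)^2 * t^2 * P)"
    have Bint: "(B has_integral IB) {a..b}"
    proof -
      have "((\<lambda>x. (v i)^2 * t^2 * P) has_integral ((b - a) * ((v i)^2 * t^2 * P))) {a..b}"
        using has_integral_const_real[of "(v i)^2 * t^2 * P" a b] ab by simp
      thus ?thesis unfolding B_def[abs_def] IB_def X1_def X2_def X3_def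
        by (intro has_integral_add ind_int)
    qed
    have X1e: "X1 = \<beta> - \<alpha>" unfolding X1_def using ab1 lohab loh by auto
    have tw: "t / w i = l2 - l1" "t / w i = e2 - e1" unfolding l1_def l2_def e1_def e2_def
      using wp by (simp_all add: field_simps)
    have twp: "t / w i > 0" using t0 wp by simp
    have X2b: "X2 \<le> t / w i" unfolding X2_def using twp tw by auto
    have X3b: "X3 \<le> t / w i" unfolding X3_def using twp tw by auto
    have cf: "0 \<le> 2 * v i * M * t * P" using vp M0 t0 P0 by simp
    have "IB \<le> (\<beta> - \<alpha>) * (- (2 * v i * t * \<mu>)) + (t / w i) * (2 * v i * M * t * P) + (t / w i) * (2 * v i * M * t * P)
        + (b - a) * ((v i)^2 * t^2 * P)"
      unfolding IB_def X1e using mult_right_mono[OF X2b cf] mult_right_mono[OF X3b cf] by linarith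
    also have "\<dots> = - 2 * c * t + t * (t * K)"
      unfolding c_def K_def using wp by (simp add: field_simps power2_eq_square)
    also have "\<dots> \<le> - 2 * c * t + t * c" using t2 t0 by (simp add: mult_left_mono)
    finally have IBb: "IB \<le> - c * t" by (simp add: algebra_simps)
    have pw: "(G x + v i * \<Delta> x)^2 * p x - (G x)^2 * p x \<le> B x" if xab: "x \<in> {a..b}" for x
    proof -
      have sabs: "\<bar>\<sigma>\<bar> = 1" "\<sigma> * \<sigma> = 1" using sg by auto
      have q0: "0 \<le> p x" using p0 by simp
      have qP: "p x \<le> P" using xP xab unfolding P_def by auto
      have gM: "\<bar>G x\<bar> \<le> M" using xM xab unfolding M_def by auto
      have "\<bar>w i * x + (\<theta> i + \<sigma> * t) - (w i * x + \<theta> i)\<bar> = t" using sabs t0 by (simp add: abs_mult)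
      hence dt: "\<bar>\<Delta> x\<bar> \<le> t" unfolding \<Delta>_def using clip_lip[of "w i * x + (\<theta> i + \<sigma> * t)" "w i * x + \<theta> i"] by linarith
      have sd: "0 \<le> \<sigma> * \<Delta> x"
      proof (cases "\<sigma> = 1")
        case True
        thus ?thesis unfolding \<Delta>_def using clip_mono[of "w i * x + \<theta> i" "w i * x + (\<theta> i + \<sigma> * t)"] t0 by simp
      next
        case False
        hence "\<sigma> = -1" using sg by simp
        thus ?thesis unfolding \<Delta>_def using clip_mono[of "w i * x + (\<theta> i + \<sigma> * t)" "w i * x + \<theta> i"] t0 by simp
      qed
      have eq: "(G x + v i * \<Delta> x)^2 * p x - (G x)^2 * p x = (2 * v i * G x * \<Delta> x) * p x + ((v i)^2 * (\<Delta> x)^2) * p x"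
        by (simp add: power2_eq_square algebra_simps)
      have T2: "((v i)^2 * (\<Delta> x)^2) * p x \<le> (v i)^2 * t^2 * P" by (rule pw2[OF dt q0 qP])
      have T2': "0 \<le> (v i)^2 * t^2 * P" using P0 by simp
      let ?J2 = "(if x \<in> {l1..l2} then 2 * v i * M * t * P else 0)"
      let ?J3 = "(if x \<in> {e1..e2} then 2 * v i * M * t * P else 0)"
      have I23: "0 \<le> ?J2" "0 \<le> ?J3"
        using cf by auto
      have Bx: "B x = (if x \<in> {\<alpha>..\<beta>} then - (2 * v i * t * \<mu>) else 0) + ?J2 + ?J3 + (v i)^2 * t^2 * P"
        unfolding B_def by simp
      show ?thesis
      proof (cases "x \<in> Iint a b w \<theta> i")
        case True
        have "\<sigma> * G x \<le> 0" using neg True unfolding G_def by force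
        hence "(\<sigma> * G x) * (\<sigma> * \<Delta> x) \<le> 0" using sd by (rule mult_nonpos_nonneg)
        moreover have "(\<sigma> * G x) * (\<sigma> * \<Delta> x) = (\<sigma> * \<sigma>) * (G x * \<Delta> x)" by (simp add: algebra_simps)
        ultimately have gd: "G x * \<Delta> x \<le> 0" using sabs by simp
        have "(2 * v i * p x) * (G x * \<Delta> x) \<le> 0" using vp q0 gd mult_nonneg_nonpos[of "2 * v i * p x" "G x * \<Delta> x"] by simp
        hence T1: "(2 * v i * G x * \<Delta> x) * p x \<le> 0" by (simp add: algebra_simps)
        show ?thesis
        proof (cases "x \<in> {\<alpha>..\<beta>}")
          case True
          have xI: "0 < w i * x + \<theta> i" "w i * x + \<theta> i < 1" using abI[OF True] Iint_mem[where w=w and i=i, OF wp] by auto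
          have "w i * \<alpha> \<le> w i * x" "w i * x \<le> w i * \<beta>" using True wp by auto
          hence r: "t \<le> w i * x + \<theta> i" "w i * x + \<theta> i \<le> 1 - t" using t1 unfolding \<tau>0_def by auto
          have "0 \<le> w i * x + (\<theta> i + \<sigma> * t)" "w i * x + (\<theta> i + \<sigma> * t) \<le> 1" using r sg t0 by auto
          hence dl: "\<Delta> x = \<sigma> * t" unfolding \<Delta>_def using xI clip_lin by simp
          have "\<phi> x \<ge> \<mu>" using xm True unfolding \<mu>_def by auto
          hence "(2 * v i * t) * \<mu> \<le> (2 * v i * t) * \<phi> x" using vp t0 by (intro mult_left_mono) auto
          moreover have "(2 * v i * G x * \<Delta> x) * p x = - ((2 * v i * t) * \<phi> x)" unfolding dl \<phi>_def by (simp add: algebra_simps)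
          ultimately have "(2 * v i * G x * \<Delta> x) * p x \<le> - (2 * v i * t * \<mu>)" by (simp add: algebra_simps)
          moreover have "(if x \<in> {\<alpha>..\<beta>} then - (2 * v i * t * \<mu>) else 0) = - (2 * v i * t * \<mu>)" using True by simp
          ultimately show ?thesis using eq Bx T2 I23 by linarith
        next
          case False
          hence "(if x \<in> {\<alpha>..\<beta>} then - (2 * v i * t * \<mu>) else 0) = 0" by auto
          thus ?thesis using eq Bx T1 T2 I23 by linarith
        qed
      next
        case False
        hence nab: "x \<notin> {\<alpha>..\<beta>}" using abI by blast
        show ?thesis
        proof (cases "p x = 0")
          case True
          moreover have "(if x \<in> {\<alpha>..\<beta>} then - (2 * v i * t * \<mu>) else 0) = 0" using nab by auto
          ultimately show ?thesis using Bx I23 T2' by simp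
        next
          case False
          hence "x \<in> {x. p x > 0}" using q0 by simp
          hence xab': "a < x" "x < b" using ps by auto
          hence nI: "\<not> (0 < w i * x + \<theta> i \<and> w i * x + \<theta> i < 1)"
            using \<open>x \<notin> Iint a b w \<theta> i\<close> Iint_mem[where w=w and i=i, OF wp] by auto
          show ?thesis
          proof (cases "\<Delta> x = 0")
            case True
            moreover have "(if x \<in> {\<alpha>..\<beta>} then - (2 * v i * t * \<mu>) else 0) = 0" using nab by auto
            ultimately show ?thesis using eq Bx I23 T2' by simp
          next
            case False
            have T1: "(2 * v i * G x * \<Delta> x) * p x \<le> 2 * v i * M * t * P" by (rule pw1[OF dt q0 qP gM vp])
            have st: "\<sigma> * t \<le> t" "- t \<le> \<sigma> * t" using sg t0 by auto
            have "x \<in> {l1..l2} \<or> x \<in> {e1..e2}"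
            proof (cases "w i * x + \<theta> i \<le> 0")
              case True
              hence c0': "clip (w i * x + \<theta> i) = 0" unfolding clip_def by simp
              have "\<not> w i * x + (\<theta> i + \<sigma> * t) \<le> 0"
              proof
                assume "w i * x + (\<theta> i + \<sigma> * t) \<le> 0"
                hence "clip (w i * x + (\<theta> i + \<sigma> * t)) = 0" unfolding clip_def by simp
                thus False using False c0' unfolding \<Delta>_def by simp
              qed
              hence "- \<theta> i - t \<le> x * w i" "x * w i \<le> - \<theta> i" using True st by (auto simp: mult.commute)
              hence "x \<in> {l1..l2}" unfolding l1_def l2_def atLeastAtMost_iff pos_divide_le_eq[OF wp] pos_le_divide_eq[OF wp] by blast
              thus ?thesis by simp
            next
              case False
              hence ge: "w i * x + \<theta> i \<ge> 1" using nI by auto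
              hence c1: "clip (w i * x + \<theta> i) = 1" unfolding clip_def by simp
              have "\<not> w i * x + (\<theta> i + \<sigma> * t) \<ge> 1"
              proof
                assume "w i * x + (\<theta> i + \<sigma> * t) \<ge> 1"
                hence "clip (w i * x + (\<theta> i + \<sigma> * t)) = 1" unfolding clip_def by simp
                thus False using \<open>\<Delta> x \<noteq> 0\<close> c1 unfolding \<Delta>_def by simp
              qed
              hence "1 - \<theta> i \<le> x * w i" "x * w i \<le> 1 - \<theta> i + t" using ge st by (auto simp: mult.commute)
              hence "x \<in> {e1..e2}" unfolding e1_def e2_def atLeastAtMost_iff pos_divide_le_eq[OF wp] pos_le_divide_eq[OF wp] by blast
              thus ?thesis by simp
            qed
            hence "2 * v i * M * t * P \<le> ?J2 + ?J3" using I23 by auto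
            moreover have "(if x \<in> {\<alpha>..\<beta>} then - (2 * v i * t * \<mu>) else 0) = 0" using nab by auto
            ultimately show ?thesis using eq Bx T1 T2 by linarith
          qed
        qed
      qed
    qed
    have "integral {a..b} (\<lambda>x. (G x + v i * \<Delta> x)^2 * p x - (G x)^2 * p x) \<le> integral {a..b} B"
      using pw by (intro integral_le integrable_diff i0 i1) (auto intro: has_integral_integrable[OF Bint])
    also have "\<dots> = IB" using Bint by (rule integral_unique)
    finally show ?thesis using Ldiff IBb by linarith
  qed
  have "(\<lambda>hh. (LL0 (\<theta> i + hh) - LL0 (\<theta> i)) / hh) \<midarrow>0\<rightarrow> 0"
    using der unfolding DERIV_def LL0_def .
  from LIM_D[OF this c0] obtain s where s: "s > 0"
    "\<forall>x. x \<noteq> 0 \<and> norm (x - 0) < s \<longrightarrow> norm ((LL0 (\<theta> i + x) - LL0 (\<theta> i)) / x - 0) < c"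
    by blast
  define t where "t = min (s/2) (min \<tau>0 (c / (K + 1)))"
  have tpos: "t > 0" unfolding t_def using s \<tau>0pos c0 K0 by simp
  have tt: "t \<le> \<tau>0" "t < s" unfolding t_def using s by auto
  have "t \<le> c / (K + 1)" unfolding t_def by simp
  hence "t * (K + 1) \<le> c" using K0 by (simp add: pos_le_divide_eq)
  hence tK: "t * K \<le> c" using tpos by (simp add: algebra_simps)
  have D: "LL0 (\<theta> i + \<sigma> * t) - LL0 (\<theta> i) \<le> - c * t" using key[OF tpos tt(1) tK] .
  have sabs: "\<bar>\<sigma>\<bar> = 1" using sg by auto
  have "\<sigma> * t \<noteq> 0" "norm (\<sigma> * t - 0) < s" using sabs tpos tt by (auto simp: abs_mult)
  hence lt: "\<bar>(LL0 (\<theta> i + \<sigma> * t) - LL0 (\<theta> i)) / (\<sigma> * t)\<bar> < c" using s(2) by auto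
  have "c * t \<le> \<bar>LL0 (\<theta> i + \<sigma> * t) - LL0 (\<theta> i)\<bar>" using D by linarith
  hence "c \<le> \<bar>LL0 (\<theta> i + \<sigma> * t) - LL0 (\<theta> i)\<bar> / t" using tpos by (simp add: pos_le_divide_eq)
  also have "\<dots> = \<bar>(LL0 (\<theta> i + \<sigma> * t) - LL0 (\<theta> i)) / (\<sigma> * t)\<bar>"
    using sabs tpos by (simp add: abs_mult)
  finally show False using lt by linarith
qed



locale setting =
  fixes a b :: real and h :: nat and v w \<theta> :: "nat \<Rightarrow> real" and f p :: "real \<Rightarrow> real"
  assumes ab: "a < b" and h1: "h \<ge> 1"
    and vpos: "\<forall>i\<in>{1..h}. v i > 0" and wpos: "\<forall>i\<in>{1..h}. w i > 0"
    and fc: "continuous_on UNIV f" and pc: "continuous_on UNIV p"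
    and p0: "\<forall>x. p x \<ge> 0" and ps: "{x. p x > 0} = {a<..<b}"
    and fmono: "mono f"
    and lip: "Lip f a b < ereal (Min ((\<lambda>i. v i * w i) ` {1..h}))"
    and der: "\<forall>k\<in>{1..h+1}. ((\<lambda>t. LL a b h v w f p (\<theta>(k := t))) has_real_derivative 0) (at (\<theta> k))"
begin

definition G where "G x = NN h v w \<theta> x - f x"
abbreviation I where "I j \<equiv> Iint a b w \<theta> j"
definition A where "A = (\<Union>j\<in>{1..h}. I j)"

lemma Gc: "continuous_on S G" unfolding G_def
  by (intro continuous_intros NN_cont continuous_on_subset[OF fc]) auto

lemma Imem: "j \<in> {1..h} \<Longrightarrow> x \<in> I j \<longleftrightarrow> a < x \<and> x < b \<and> 0 < w j * x + \<theta> j \<and> w j * x + \<theta> j < 1"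
  using Iint_mem[where w=w and i=j] wpos by blast

lemma Iconv:
  assumes j: "j \<in> {1..h}" and "y1 \<in> I j" "y2 \<in> I j" "y1 \<le> y" "y \<le> y2"
  shows "y \<in> I j"
proof -
  have wj: "w j > 0" using wpos j by auto
  have "w j * y1 \<le> w j * y" "w j * y \<le> w j * y2" using assms(4,5) wj by auto
  moreover have "a < y1" "0 < w j * y1 + \<theta> j" "y2 < b" "w j * y2 + \<theta> j < 1"
    using Imem[OF j] assms(2,3) by blast+
  ultimately show ?thesis unfolding Imem[OF j] using assms(4,5) by (intro conjI) linarith+
qed

lemma fstep:
  assumes "a \<le> y1" "y1 < y2" "y2 \<le> b"
  shows "f y2 - f y1 < Min ((\<lambda>i. v i * w i) ` {1..h}) * (y2 - y1)"
proof -
  have "ereal (\<bar>f y2 - f y1\<bar> / \<bar>y2 - y1\<bar>) \<in> {ereal (\<bar>f x - f y\<bar> / \<bar>x - y\<bar>) | x y.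
      x \<in> {a..b} \<and> y \<in> {a..b} \<and> x \<noteq> y}"
    unfolding mem_Collect_eq by (rule exI[of _ y2], rule exI[of _ y1]) (use assms in auto)
  hence "ereal (\<bar>f y2 - f y1\<bar> / \<bar>y2 - y1\<bar>) \<le> Lip f a b" unfolding Lip_def by (rule Sup_upper)
  hence "ereal (\<bar>f y2 - f y1\<bar> / \<bar>y2 - y1\<bar>) < ereal (Min ((\<lambda>i. v i * w i) ` {1..h}))" using lip by (rule le_less_trans)
  hence "\<bar>f y2 - f y1\<bar> / (y2 - y1) < Min ((\<lambda>i. v i * w i) ` {1..h})" using assms by simp
  hence "\<bar>f y2 - f y1\<bar> < Min ((\<lambda>i. v i * w i) ` {1..h}) * (y2 - y1)" using assms by (simp add: pos_divide_less_eq)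
  thus ?thesis by (simp add: abs_le_iff)
qed

lemma Ndiff: "NN h v w \<theta> y2 - NN h v w \<theta> y1 = (\<Sum>i=1..h. v i * (clip (w i * y2 + \<theta> i) - clip (w i * y1 + \<theta> i)))"
  unfolding NN_def right_diff_distrib sum_subtractf by simp

lemma cdiff:
  assumes "i \<in> {1..h}" "y1 \<le> y2"
  shows "0 \<le> clip (w i * y2 + \<theta> i) - clip (w i * y1 + \<theta> i)"
        "clip (w i * y2 + \<theta> i) - clip (w i * y1 + \<theta> i) \<le> 1"
proof -
  have "w i * y1 \<le> w i * y2" using assms wpos by (auto intro: mult_left_mono)
  thus "0 \<le> clip (w i * y2 + \<theta> i) - clip (w i * y1 + \<theta> i)" using clip_mono[of "w i * y1 + \<theta> i" "w i * y2 + \<theta> i"] by simp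
  show "clip (w i * y2 + \<theta> i) - clip (w i * y1 + \<theta> i) \<le> 1" using clip_le1 clip_ge0 by (smt (verit))
qed

lemma smono:
  assumes j: "j \<in> {1..h}" and y: "y1 < y2" "y1 \<in> I j" "y2 \<in> I j"
  shows "G y1 < G y2"
proof -
  have r: "a < y1" "y2 < b" "0 < w j * y1 + \<theta> j" "w j * y2 + \<theta> j < 1" using y Imem[OF j] by auto
  have r2: "w j * y1 + \<theta> j < 1" "0 < w j * y2 + \<theta> j" using y Imem[OF j] by auto
  have cj: "clip (w j * y2 + \<theta> j) - clip (w j * y1 + \<theta> j) = w j * (y2 - y1)"
    using r r2 clip_lin by (simp add: algebra_simps)
  have "v j * (clip (w j * y2 + \<theta> j) - clip (w j * y1 + \<theta> j)) \<le> (\<Sum>i=1..h. v i * (clip (w i * y2 + \<theta> i) - clip (w i * y1 + \<theta> i)))"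
  proof (rule member_le_sum)
    fix i assume "i \<in> {1..h} - {j}"
    hence ii: "i \<in> {1..h}" by simp
    hence "v i > 0" using vpos by blast
    thus "0 \<le> v i * (clip (w i * y2 + \<theta> i) - clip (w i * y1 + \<theta> i))"
      using cdiff[OF ii, of y1 y2] y(1) by (intro mult_nonneg_nonneg) auto
  qed (use j in auto)
  hence N: "v j * w j * (y2 - y1) \<le> NN h v w \<theta> y2 - NN h v w \<theta> y1" unfolding Ndiff cj by (simp add: mult.assoc)
  have "Min ((\<lambda>i. v i * w i) ` {1..h}) \<le> v j * w j" using j by (intro Min_le) auto
  hence "Min ((\<lambda>i. v i * w i) ` {1..h}) * (y2 - y1) \<le> v j * w j * (y2 - y1)" using y(1) by (intro mult_right_mono) auto
  moreover have "f y2 - f y1 < Min ((\<lambda>i. v i * w i) ` {1..h}) * (y2 - y1)" using fstep r y by simp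
  ultimately show ?thesis using N unfolding G_def by linarith
qed

lemma zero:
  assumes j: "j \<in> {1..h}" and ne: "I j \<noteq> {}"
  shows "\<exists>z\<in>I j. G z = 0"
proof (rule ccontr)
  assume nz: "\<not> (\<exists>z\<in>I j. G z = 0)"
  have dj: "((\<lambda>t. LL a b h v w f p (\<theta>(j := t))) has_real_derivative 0) (at (\<theta> j))" using der j by (simp add: Ball_def)
  have vj: "v j > 0" and wj: "w j > 0" using vpos wpos j by auto
  have "(\<forall>z\<in>I j. 0 < G z) \<or> (\<forall>z\<in>I j. G z < 0)"
  proof (rule ccontr)
    assume nn: "\<not> ?thesis"
    then obtain y1 where y1: "y1 \<in> I j" "\<not> 0 < G y1" by blast
    from nn obtain y2 where y2: "y2 \<in> I j" "\<not> G y2 < 0" by blast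
    have "G y1 \<noteq> 0" "G y2 \<noteq> 0" using nz y1 y2 by blast+
    hence y: "y1 \<in> I j" "y2 \<in> I j" "G y1 < 0" "0 < G y2" using y1 y2 by auto
    show False
    proof (cases "y1 \<le> y2")
      case True
      then obtain z where "y1 \<le> z" "z \<le> y2" "G z = 0" using IVT'[of G y1 0 y2] Gc y by auto
      thus False using Iconv[OF j y(1,2)] nz by auto
    next
      case False
      then obtain z where "y2 \<le> z" "z \<le> y1" "G z = 0" using IVT2'[where f=G and a=y2 and b=y1 and y=0] Gc y by auto
      thus False using Iconv[OF j y(2,1)] nz by auto
    qed
  qed
  thus False
  proof
    assume "\<forall>z\<in>I j. 0 < G z"
    have "\<forall>x\<in>I j. (-1) * (NN h v w \<theta> x - f x) < 0" using \<open>\<forall>z\<in>I j. 0 < G z\<close> unfolding G_def by simp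
    show False by (rule crit[OF ab vj wj j fc pc p0 ps dj ne _ \<open>\<forall>x\<in>I j. (-1) * (NN h v w \<theta> x - f x) < 0\<close>]) simp
  next
    assume "\<forall>z\<in>I j. G z < 0"
    have "\<forall>x\<in>I j. 1 * (NN h v w \<theta> x - f x) < 0" using \<open>\<forall>z\<in>I j. G z < 0\<close> unfolding G_def by simp
    show False by (rule crit[OF ab vj wj j fc pc p0 ps dj ne _ \<open>\<forall>x\<in>I j. 1 * (NN h v w \<theta> x - f x) < 0\<close>]) simp
  qed
qed


lemma umono0:
  assumes k1: "k1 \<in> {1..h}" and k2: "k2 \<in> {1..h}" and y: "y \<in> I k1" "y \<in> I k2"
    and q: "q1 < q2" "q1 \<in> I k1" "q2 \<in> I k2"
  shows "G q1 < G q2"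
proof (cases "y \<le> q1")
  case True
  hence "q1 \<in> I k2" using Iconv[OF k2 y(2) q(3)] q(1) by simp
  thus ?thesis using smono[OF k2 q(1)] q by simp
next
  case False
  show ?thesis
  proof (cases "q2 \<le> y")
    case True
    hence "q2 \<in> I k1" using Iconv[OF k1 q(2) y(1)] q(1) by simp
    thus ?thesis using smono[OF k1 q(1)] q by simp
  next
    case False
    hence "q1 < y" "y < q2" using \<open>\<not> y \<le> q1\<close> by auto
    hence "G q1 < G y" "G y < G q2" using smono[OF k1 _ q(2) y(1)] smono[OF k2 _ y(2) q(3)] by auto
    thus ?thesis by simp
  qed
qed

lemma umono:
  assumes i: "i \<in> {1..h}" and j: "j \<in> {1..h}" and y: "y \<in> I i" "y \<in> I j"
    and q: "q1 < q2" "q1 \<in> I i \<union> I j" "q2 \<in> I i \<union> I j"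
  shows "G q1 < G q2"
proof -
  consider "q1 \<in> I i" "q2 \<in> I i" | "q1 \<in> I i" "q2 \<in> I j" | "q1 \<in> I j" "q2 \<in> I i" | "q1 \<in> I j" "q2 \<in> I j"
    using q by blast
  thus ?thesis
  proof cases
    case 1 thus ?thesis using umono0[OF i i y(1) y(1) q(1)] by simp
  next
    case 2 thus ?thesis using umono0[OF i j y(1) y(2) q(1)] by simp
  next
    case 3 thus ?thesis using umono0[OF j i y(2) y(1) q(1)] by simp
  next
    case 4 thus ?thesis using umono0[OF j j y(2) y(2) q(1)] by simp
  qed
qed

lemma cross:
  assumes i: "i \<in> {1..h}" and y: "a \<le> y1" "y1 < y2" "y2 \<le> b"
    and ne: "clip (w i * y1 + \<theta> i) \<noteq> clip (w i * y2 + \<theta> i)"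
  shows "\<exists>y. y1 < y \<and> y < y2 \<and> y \<in> I i"
proof -
  have wi: "w i > 0" using wpos i by auto
  define g1 where "g1 = w i * y1 + \<theta> i"
  define g2 where "g2 = w i * y2 + \<theta> i"
  have "w i * y1 < w i * y2" using wi y(2) by simp
  hence g12: "g1 < g2" unfolding g1_def g2_def by simp
  have cl: "clip g1 < clip g2" using clip_mono[of g1 g2] g12 ne unfolding g1_def g2_def by simp
  have g2p: "0 < g2"
  proof (rule ccontr)
    assume "\<not> 0 < g2"
    hence "clip g1 = 0" "clip g2 = 0" using g12 unfolding clip_def by auto
    thus False using cl by simp
  qed
  have g1p: "g1 < 1"
  proof (rule ccontr)
    assume "\<not> g1 < 1"
    hence "clip g1 = 1" "clip g2 = 1" using g12 unfolding clip_def by auto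
    thus False using cl by simp
  qed
  define u where "u = (max g1 0 + min g2 1) / 2"
  have u: "0 < u" "u < 1" "g1 < u" "u < g2" unfolding u_def using g12 g2p g1p by auto
  define y where "y = (u - \<theta> i) / w i"
  have wy: "w i * y + \<theta> i = u" unfolding y_def using wi by simp
  have "w i * y1 < w i * y" "w i * y < w i * y2" using u wy unfolding g1_def g2_def by linarith+
  hence yy: "y1 < y" "y < y2" using wi by simp_all
  have "y \<in> I i" unfolding Imem[OF i] wy using yy y u by simp
  thus ?thesis using yy by blast
qed

lemma vnn: "i \<in> {1..h} \<Longrightarrow> 0 \<le> v i" using vpos by (meson less_imp_le)

lemma Vsum_le:
  assumes "z \<in> {a<..<b}"
  shows "(\<Sum>i\<in>{i \<in> {1..h}. z \<in> I i}. v i) \<le> Vsup a b h v w \<theta>"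
  unfolding Vsup_def
proof (rule cSup_upper)
  show "(\<Sum>i\<in>{i \<in> {1..h}. z \<in> I i}. v i) \<in> (\<lambda>x. \<Sum>j\<in>{j \<in> {1..h}. x \<in> I j}. v j) ` {a<..<b}"
    using assms by blast
  show "bdd_above ((\<lambda>x. \<Sum>j\<in>{j \<in> {1..h}. x \<in> I j}. v j) ` {a<..<b})"
  proof (rule bdd_aboveI2)
    fix x
    show "(\<Sum>j\<in>{j \<in> {1..h}. x \<in> I j}. v j) \<le> (\<Sum>j\<in>{1..h}. v j)"
      by (rule sum_mono2) (auto intro: vnn)
  qed
qed

lemma S_nonneg: "0 \<le> (\<Sum>i\<in>{i \<in> {1..h}. z \<in> I i}. v i)"
  by (rule sum_nonneg) (auto intro: vnn)

lemma partI:
  assumes j: "j \<in> {1..h}" and x: "x \<in> I j"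
  shows "\<bar>G x\<bar> \<le> Vsup a b h v w \<theta>"
proof -
  obtain z where z: "z \<in> I j" "G z = 0" using zero[OF j] x by blast
  define S where "S = {i \<in> {1..h}. z \<in> I i}"
  have zab: "z \<in> {a<..<b}" using z(1) unfolding Iint_def by auto
  have SV: "(\<Sum>i\<in>S. v i) \<le> Vsup a b h v w \<theta>" unfolding S_def by (rule Vsum_le[OF zab])
  have S0: "0 \<le> (\<Sum>i\<in>S. v i)" unfolding S_def by (rule S_nonneg)
  have key: "z \<in> I i" if i: "i \<in> {1..h}" and yy: "y1 < y2" "y1 \<in> I j" "y2 \<in> I j" "z = y1 \<or> z = y2"
      and cne: "clip (w i * y1 + \<theta> i) \<noteq> clip (w i * y2 + \<theta> i)" for i y1 y2
  proof (rule ccontr)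
    assume zn: "z \<notin> I i"
    have "a < y1" "y2 < b" using yy(2,3) Imem[OF j] by blast+
    then obtain y where y: "y1 < y" "y < y2" "y \<in> I i" using cross[OF i _ yy(1) _ cne] by auto
    have yj: "y \<in> I j" using Iconv[OF j yy(2) yy(3)] y by simp
    obtain zi where zi: "zi \<in> I i" "G zi = 0" using zero[OF i] y(3) by blast
    have "z \<in> I i \<union> I j" "zi \<in> I i \<union> I j" using z zi by auto
    moreover have "z \<noteq> zi" using zn zi by auto
    ultimately show False
      using umono[OF i j y(3) yj, of z zi] umono[OF i j y(3) yj, of zi z] z zi
      by (metis less_irrefl linorder_neqE_linordered_idom)
  qed
  have bound: "NN h v w \<theta> y2 - NN h v w \<theta> y1 \<le> (\<Sum>i\<in>S. v i)"
    if yy: "y1 < y2" "y1 \<in> I j" "y2 \<in> I j" "z = y1 \<or> z = y2" for y1 y2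
  proof -
    have "NN h v w \<theta> y2 - NN h v w \<theta> y1 \<le> (\<Sum>i=1..h. if z \<in> I i then v i else 0)"
      unfolding Ndiff
    proof (rule sum_mono)
      fix i assume i: "i \<in> {1..h}"
      have vi: "v i > 0" using vpos i by blast
      have c01: "0 \<le> clip (w i * y2 + \<theta> i) - clip (w i * y1 + \<theta> i)" "clip (w i * y2 + \<theta> i) - clip (w i * y1 + \<theta> i) \<le> 1"
        using cdiff[OF i, of y1 y2] yy(1) by auto
      show "v i * (clip (w i * y2 + \<theta> i) - clip (w i * y1 + \<theta> i)) \<le> (if z \<in> I i then v i else 0)"
      proof (cases "clip (w i * y1 + \<theta> i) = clip (w i * y2 + \<theta> i)")
        case True
        thus ?thesis using vi by simp
      next
        case False
        hence "z \<in> I i" using key[OF i yy] by blast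
        moreover have "v i * (clip (w i * y2 + \<theta> i) - clip (w i * y1 + \<theta> i)) \<le> v i * 1"
          using vi c01 by (intro mult_left_mono) auto
        ultimately show ?thesis by simp
      qed
    qed
    also have "\<dots> = (\<Sum>i\<in>S. v i)" unfolding S_def by (rule sum.inter_filter[symmetric]) simp
    finally show ?thesis .
  qed
  have fm: "f y1 \<le> f y2" if "y1 \<le> y2" for y1 y2 using fmono that by (simp add: mono_def)
  consider "x = z" | "z < x" | "x < z" by linarith
  thus ?thesis
  proof cases
    case 1 thus ?thesis using z S0 SV by simp
  next
    case 2
    have "G z < G x" using smono[OF j 2 z(1) x] .
    moreover have "NN h v w \<theta> x - NN h v w \<theta> z \<le> (\<Sum>i\<in>S. v i)" using bound[OF 2 z(1) x] by simp
    moreover have "f z \<le> f x" using fm 2 by simp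
    ultimately show ?thesis using z(2) SV unfolding G_def by linarith
  next
    case 3
    have "G x < G z" using smono[OF j 3 x z(1)] .
    moreover have "NN h v w \<theta> z - NN h v w \<theta> x \<le> (\<Sum>i\<in>S. v i)" using bound[OF 3 x z(1)] by simp
    moreover have "f x \<le> f z" using fm 3 by simp
    ultimately show ?thesis using z(2) SV unfolding G_def by linarith
  qed
qed


lemma AI: "j \<in> {1..h} \<Longrightarrow> x \<in> I j \<Longrightarrow> x \<in> A" unfolding A_def by blast

lemma Aab: "x \<in> A \<Longrightarrow> a < x \<and> x < b" unfolding A_def Iint_def by auto

lemma Abound: "x \<in> A \<Longrightarrow> \<bar>G x\<bar> \<le> Vsup a b h v w \<theta>"
  unfolding A_def using partI by blast

lemma clos:
  assumes "x \<in> closure A"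
  shows "\<bar>G x\<bar> \<le> Vsup a b h v w \<theta>"
proof -
  have "closed {x. \<bar>G x\<bar> \<le> Vsup a b h v w \<theta>}"
    by (rule closed_Collect_le) (intro continuous_intros Gc)+
  moreover have "A \<subseteq> {x. \<bar>G x\<bar> \<le> Vsup a b h v w \<theta>}" using Abound by blast
  ultimately have "closure A \<subseteq> {x. \<bar>G x\<bar> \<le> Vsup a b h v w \<theta>}" by (rule closure_minimal[rotated])
  thus ?thesis using assms by blast
qed

lemma nonincr:
  assumes y: "a \<le> y1" "y1 \<le> y2" "y2 \<le> b" and no: "\<And>y. y1 < y \<Longrightarrow> y < y2 \<Longrightarrow> y \<notin> A"
  shows "G y2 \<le> G y1"
proof (cases "y1 = y2")
  case True thus ?thesis by simp
next
  case False
  hence lt: "y1 < y2" using y by simp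
  have "NN h v w \<theta> y2 - NN h v w \<theta> y1 = 0" unfolding Ndiff
  proof (rule sum.neutral, rule ballI)
    fix i assume i: "i \<in> {1..h}"
    have "clip (w i * y1 + \<theta> i) = clip (w i * y2 + \<theta> i)"
    proof (rule ccontr)
      assume "clip (w i * y1 + \<theta> i) \<noteq> clip (w i * y2 + \<theta> i)"
      then obtain y where "y1 < y" "y < y2" "y \<in> I i" using cross[OF i y(1) lt y(3)] by blast
      thus False using no AI[OF i] by blast
    qed
    thus "v i * (clip (w i * y2 + \<theta> i) - clip (w i * y1 + \<theta> i)) = 0" by simp
  qed
  moreover have "f y1 \<le> f y2" using fmono y(2) by (simp add: mono_def)
  ultimately show ?thesis unfolding G_def by linarith
qed

lemma upper:
  assumes x: "a \<le> x" "x \<le> b" and ne: "A \<inter> {..x} \<noteq> {}"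
  shows "G x \<le> Vsup a b h v w \<theta>"
proof -
  define T where "T = A \<inter> {..x}"
  have bT: "bdd_above T" unfolding T_def by (rule bdd_aboveI[of _ x]) auto
  have neT: "T \<noteq> {}" using ne unfolding T_def .
  define l where "l = Sup T"
  have lx: "l \<le> x" unfolding l_def T_def by (rule cSup_least) (use ne in auto)
  obtain y0 where y0: "y0 \<in> T" using neT by blast
  have "y0 \<le> l" unfolding l_def by (rule cSup_upper[OF y0 bT])
  moreover have "a < y0" using y0 Aab unfolding T_def by blast
  ultimately have al: "a \<le> l" by simp
  have "l \<in> closure T" unfolding l_def by (rule closure_contains_Sup[OF neT bT])
  hence "l \<in> closure A" using closure_mono[of T A] unfolding T_def by blast
  hence Gl: "\<bar>G l\<bar> \<le> Vsup a b h v w \<theta>" by (rule clos)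
  have no: "y \<notin> A" if "l < y" "y < x" for y
  proof
    assume "y \<in> A"
    hence "y \<in> T" using that unfolding T_def by simp
    hence "y \<le> l" unfolding l_def using bT by (rule cSup_upper)
    thus False using that by simp
  qed
  have "G x \<le> G l" by (rule nonincr[OF al lx x(2) no])
  thus ?thesis using Gl by linarith
qed

lemma upper2:
  assumes x: "a \<le> x" "x \<le> b" and e: "A \<inter> {..x} = {}"
  shows "G x \<le> G a"
proof (rule nonincr[OF order_refl x])
  fix y assume "a < y" "y < x"
  thus "y \<notin> A" using e by auto
qed

lemma lower:
  assumes x: "a \<le> x" "x \<le> b" and ne: "A \<inter> {x..} \<noteq> {}"
  shows "- Vsup a b h v w \<theta> \<le> G x"
proof -
  define T where "T = A \<inter> {x..}"
  have bT: "bdd_below T" unfolding T_def by (rule bdd_belowI[of _ x]) auto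
  have neT: "T \<noteq> {}" using ne unfolding T_def .
  define r where "r = Inf T"
  have xr: "x \<le> r" unfolding r_def T_def by (rule cInf_greatest) (use ne in auto)
  obtain y0 where y0: "y0 \<in> T" using neT by blast
  have "r \<le> y0" unfolding r_def by (rule cInf_lower[OF y0 bT])
  moreover have "y0 < b" using y0 Aab unfolding T_def by blast
  ultimately have rb: "r \<le> b" by simp
  have "r \<in> closure T" unfolding r_def by (rule closure_contains_Inf[OF neT bT])
  hence "r \<in> closure A" using closure_mono[of T A] unfolding T_def by blast
  hence Gr: "\<bar>G r\<bar> \<le> Vsup a b h v w \<theta>" by (rule clos)
  have no: "y \<notin> A" if "x < y" "y < r" for y
  proof
    assume "y \<in> A"
    hence "y \<in> T" using that unfolding T_def by simp
    hence "r \<le> y" unfolding r_def using bT by (rule cInf_lower)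
    thus False using that by simp
  qed
  have "G r \<le> G x" by (rule nonincr[OF x(1) xr rb no])
  thus ?thesis using Gr by linarith
qed

lemma lower2:
  assumes x: "a \<le> x" "x \<le> b" and e: "A \<inter> {x..} = {}"
  shows "G b \<le> G x"
proof (rule nonincr[OF x order_refl])
  fix y assume "x < y" "y < b"
  thus "y \<notin> A" using e by auto
qed

lemma supI: "y \<in> I j \<Longrightarrow> y \<le> Sup (I j)"
  by (rule cSup_upper) (auto intro!: bdd_aboveI[of _ b] simp: Iint_def)

lemma infI: "y \<in> I j \<Longrightarrow> Inf (I j) \<le> y"
  by (rule cInf_lower) (auto intro!: bdd_belowI[of _ a] simp: Iint_def)

lemma main:
  shows "(\<forall>j\<in>{1..h}. \<forall>x\<in>Iint a b w \<theta> j.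
            \<bar>NN h v w \<theta> x - f x\<bar> \<le> Vsup a b h v w \<theta>)
       \<and> (\<forall>j\<in>{1..h}. \<forall>k\<in>{1..h}. Iint a b w \<theta> j \<noteq> {} \<longrightarrow> Iint a b w \<theta> k \<noteq> {} \<longrightarrow>
            (\<forall>x\<in>{Sup (Iint a b w \<theta> j) .. Inf (Iint a b w \<theta> k)}.
               \<bar>NN h v w \<theta> x - f x\<bar> \<le> Vsup a b h v w \<theta>))
       \<and> (\<forall>j\<in>{1..h}. Iint a b w \<theta> j \<noteq> {} \<longrightarrow>
            (\<forall>x\<in>{Sup (Iint a b w \<theta> j) .. b}.
               \<bar>NN h v w \<theta> x - f x\<bar> \<le> max (Vsup a b h v w \<theta>) \<bar>f b - NN h v w \<theta> b\<bar>))
       \<and> (\<forall>j\<in>{1..h}. Iint a b w \<theta> j \<noteq> {} \<longrightarrow>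
            (\<forall>x\<in>{a .. Inf (Iint a b w \<theta> j)}.
               \<bar>NN h v w \<theta> x - f x\<bar> \<le> max (Vsup a b h v w \<theta>) \<bar>f a - NN h v w \<theta> a\<bar>))"
proof (intro conjI ballI impI)
  fix j x assume j: "j \<in> {1..h}" and x: "x \<in> I j"
  show "\<bar>NN h v w \<theta> x - f x\<bar> \<le> Vsup a b h v w \<theta>" using partI[OF j x] unfolding G_def .
next
  fix j k x assume j: "j \<in> {1..h}" and k: "k \<in> {1..h}" and nj: "I j \<noteq> {}" and nk: "I k \<noteq> {}"
    and x: "x \<in> {Sup (I j) .. Inf (I k)}"
  obtain y0 where y0: "y0 \<in> I j" using nj by blast
  obtain y1 where y1: "y1 \<in> I k" using nk by blast
  have "y0 \<le> x" "x \<le> y1" using supI[OF y0] infI[OF y1] x by auto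
  moreover have "a < y0" "y1 < b" using Aab AI[OF j y0] AI[OF k y1] by blast+
  ultimately have xab: "a \<le> x" "x \<le> b" by linarith+
  have "A \<inter> {..x} \<noteq> {}" using AI[OF j y0] \<open>y0 \<le> x\<close> by blast
  hence "G x \<le> Vsup a b h v w \<theta>" by (rule upper[OF xab])
  moreover have "A \<inter> {x..} \<noteq> {}" using AI[OF k y1] \<open>x \<le> y1\<close> by blast
  hence "- Vsup a b h v w \<theta> \<le> G x" by (rule lower[OF xab])
  ultimately show "\<bar>NN h v w \<theta> x - f x\<bar> \<le> Vsup a b h v w \<theta>" unfolding G_def by linarith
next
  fix j x assume j: "j \<in> {1..h}" and nj: "I j \<noteq> {}" and x: "x \<in> {Sup (I j) .. b}"
  obtain y0 where y0: "y0 \<in> I j" using nj by blast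
  have "y0 \<le> x" "x \<le> b" using supI[OF y0] x by auto
  moreover have "a < y0" using Aab AI[OF j y0] by blast
  ultimately have xab: "a \<le> x" "x \<le> b" by linarith+
  have "A \<inter> {..x} \<noteq> {}" using AI[OF j y0] \<open>y0 \<le> x\<close> by blast
  hence up: "G x \<le> Vsup a b h v w \<theta>" by (rule upper[OF xab])
  have lo: "- max (Vsup a b h v w \<theta>) \<bar>G b\<bar> \<le> G x"
  proof (cases "A \<inter> {x..} = {}")
    case True thus ?thesis using lower2[OF xab] by force
  next
    case False thus ?thesis using lower[OF xab] by force
  qed
  have "\<bar>f b - NN h v w \<theta> b\<bar> = \<bar>G b\<bar>" unfolding G_def by simp
  thus "\<bar>NN h v w \<theta> x - f x\<bar> \<le> max (Vsup a b h v w \<theta>) \<bar>f b - NN h v w \<theta> b\<bar>"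
    using up lo unfolding G_def by linarith
next
  fix j x assume j: "j \<in> {1..h}" and nj: "I j \<noteq> {}" and x: "x \<in> {a .. Inf (I j)}"
  obtain y1 where y1: "y1 \<in> I j" using nj by blast
  have "a \<le> x" "x \<le> y1" using infI[OF y1] x by auto
  moreover have "y1 < b" using Aab AI[OF j y1] by blast
  ultimately have xab: "a \<le> x" "x \<le> b" by linarith+
  have "A \<inter> {x..} \<noteq> {}" using AI[OF j y1] \<open>x \<le> y1\<close> by blast
  hence lo: "- Vsup a b h v w \<theta> \<le> G x" by (rule lower[OF xab])
  have up: "G x \<le> max (Vsup a b h v w \<theta>) \<bar>G a\<bar>"
  proof (cases "A \<inter> {..x} = {}")
    case True thus ?thesis using upper2[OF xab] by force
  next
    case False thus ?thesis using upper[OF xab] by force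
  qed
  have "\<bar>f a - NN h v w \<theta> a\<bar> = \<bar>G a\<bar>" unfolding G_def by simp
  thus "\<bar>NN h v w \<theta> x - f x\<bar> \<le> max (Vsup a b h v w \<theta>) \<bar>f a - NN h v w \<theta> a\<bar>"
    using up lo unfolding G_def by linarith
qed

end

theorem lemma2p12:
  fixes a b :: real and h :: nat and v w \<theta> :: "nat \<Rightarrow> real" and f p :: "real \<Rightarrow> real"
  assumes "a < b" and "h \<ge> 1"
    and "\<forall>i\<in>{1..h}. v i > 0" and "\<forall>i\<in>{1..h}. w i > 0"
    and "continuous_on UNIV f" and "continuous_on UNIV p"
    and "\<forall>x. p x \<ge> 0" and "{x. p x > 0} = {a<..<b}"
    and "mono f"
    and "Lip f a b < ereal (Min ((\<lambda>i. v i * w i) ` {1..h}))"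
    and "\<forall>k\<in>{1..h+1}. ((\<lambda>t. LL a b h v w f p (\<theta>(k := t))) has_real_derivative 0) (at (\<theta> k))"
  shows "(\<forall>j\<in>{1..h}. \<forall>x\<in>Iint a b w \<theta> j.
            \<bar>NN h v w \<theta> x - f x\<bar> \<le> Vsup a b h v w \<theta>)
       \<and> (\<forall>j\<in>{1..h}. \<forall>k\<in>{1..h}. Iint a b w \<theta> j \<noteq> {} \<longrightarrow> Iint a b w \<theta> k \<noteq> {} \<longrightarrow>
            (\<forall>x\<in>{Sup (Iint a b w \<theta> j) .. Inf (Iint a b w \<theta> k)}.
               \<bar>NN h v w \<theta> x - f x\<bar> \<le> Vsup a b h v w \<theta>))
       \<and> (\<forall>j\<in>{1..h}. Iint a b w \<theta> j \<noteq> {} \<longrightarrow>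
            (\<forall>x\<in>{Sup (Iint a b w \<theta> j) .. b}.
               \<bar>NN h v w \<theta> x - f x\<bar> \<le> max (Vsup a b h v w \<theta>) \<bar>f b - NN h v w \<theta> b\<bar>))
       \<and> (\<forall>j\<in>{1..h}. Iint a b w \<theta> j \<noteq> {} \<longrightarrow>
            (\<forall>x\<in>{a .. Inf (Iint a b w \<theta> j)}.
               \<bar>NN h v w \<theta> x - f x\<bar> \<le> max (Vsup a b h v w \<theta>) \<bar>f a - NN h v w \<theta> a\<bar>))"
proof -
  have "setting a b h v w \<theta> f p" unfolding setting_def using assms by blast
  thus ?thesis by (rule setting.main)
qed

end
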